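(* Let $\Sigma$ be a finitary signature, $X$ a set, and fix $p\in X\cup\Sigma_0$. Consider the set $\Psi_\Sigma X$ of all $\Sigma$-trees over $X$, ordered by cutting. Then every strictly increasing sequence $s_0<s_1<s_2<\cdots$ in $\Psi_\Sigma X$ consists of finite trees (i.e. lies in $\Phi_\Sigma X$), and it has exactly one upper bound in $\Psi_\Sigma X$.
   Context: A finitary signature is a sequence $\Sigma=(\Sigma_n)_{n\in\mathbb N}$ of sets ($\Sigma_n$ = $n$-ary operation symbols). A $\Sigma$-tree is an ordered (planar) rooted tree, finite or infinite, whose nodes are labelled in $\bigcup_n\Sigma_n$ such that a node labelled by $\sigma\in\Sigma_n$ has exactly $n$ children; trees are considered up to isomorphism. For a set $X$, a $\Sigma$-tree over $X$ is a $(\Sigma+X)$-tree where the elements of $X$ are added as nullary symbols. $\Psi_\Sigma X$ is the set of all $\Sigma$-trees over $X$ and $\Phi_\Sigma X\subseteq\Psi_\Sigma X$ the set of finite ones. For a tree $t$ and $n\in\mathbb N$, the cutting $\partial_n t$ is the tree obtained from $t$ by deleting all nodes of height $>n$ and relabelling all remaining nodes of height $n$ (which are now leaves) by $p$ (the root has height $0$). The order by cutting on $\Psi_\Sigma X$: $s\le s'$ iff $s=s'$ or $s=\partial_n s'$ for some $n\in\mathbb N$. *)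

theory Defs
  imports Main
begin

text \<open>A finitary signature is \<open>Sig :: nat \<Rightarrow> 's set\<close> (\<open>Sig n\<close> = n-ary symbols).
Node labels of trees over X: \<open>Inl (n, \<sigma>)\<close> for \<open>\<sigma> \<in> Sig n\<close> (the arity is recorded,
so the Sig n are treated as disjoint), or \<open>Inr x\<close> for a variable \<open>x \<in> X\<close>.
A (possibly infinite) ordered tree is represented canonically (i.e. up to isomorphism)
as a partial map from positions (lists of child indices) to labels.\<close>

type_synonym ('s, 'x) lab = "(nat \<times> 's) + 'x"
type_synonym ('s, 'x) tree = "nat list \<Rightarrow> ('s, 'x) lab option"

definition is_label :: "(nat \<Rightarrow> 's set) \<Rightarrow> 'x set \<Rightarrow> ('s, 'x) lab \<Rightarrow> bool" where
  "is_label Sig X l \<longleftrightarrow> (case l of Inl (n, \<sigma>) \<Rightarrow> \<sigma> \<in> Sig n | Inr x \<Rightarrow> x \<in> X)"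

definition arity :: "('s, 'x) lab \<Rightarrow> nat" where
  "arity l = (case l of Inl (n, _) \<Rightarrow> n | Inr _ \<Rightarrow> 0)"

definition Psi :: "(nat \<Rightarrow> 's set) \<Rightarrow> 'x set \<Rightarrow> ('s, 'x) tree set" where
  "Psi Sig X = {t. t [] \<noteq> None
     \<and> (\<forall>w i. t (w @ [i]) \<noteq> None \<longrightarrow> t w \<noteq> None)
     \<and> (\<forall>w l. t w = Some l \<longrightarrow> is_label Sig X l \<and> (\<forall>i. t (w @ [i]) \<noteq> None \<longleftrightarrow> i < arity l))}"

definition finite_tree :: "('s, 'x) tree \<Rightarrow> bool" where
  "finite_tree t \<longleftrightarrow> finite {w. t w \<noteq> None}"

definition Phi :: "(nat \<Rightarrow> 's set) \<Rightarrow> 'x set \<Rightarrow> ('s, 'x) tree set" where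
  "Phi Sig X = {t \<in> Psi Sig X. finite_tree t}"

text \<open>Cutting at height n (the height of a node is the length of its position),
relabelling the new leaves at height n by p.\<close>
definition cut :: "('s, 'x) lab \<Rightarrow> nat \<Rightarrow> ('s, 'x) tree \<Rightarrow> ('s, 'x) tree" where
  "cut p n t = (\<lambda>w. if length w < n then t w
                    else if length w = n then (if t w = None then None else Some p)
                    else None)"

definition cut_le :: "('s, 'x) lab \<Rightarrow> ('s, 'x) tree \<Rightarrow> ('s, 'x) tree \<Rightarrow> bool" where
  "cut_le p s s' \<longleftrightarrow> s = s' \<or> (\<exists>n. s = cut p n s')"

definition cut_less :: "('s, 'x) lab \<Rightarrow> ('s, 'x) tree \<Rightarrow> ('s, 'x) tree \<Rightarrow> bool" where
  "cut_less p s s' \<longleftrightarrow> cut_le p s s' \<and> s \<noteq> s'"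

end

theory Submission
  imports Defs
begin

lemma cut_cut: "b \<le> a \<Longrightarrow> cut p a (cut p b t) = cut p b t"
  by (rule ext) (auto simp: cut_def)

lemma cut_agree: "length w < n \<Longrightarrow> cut p n t w = t w"
  by (simp add: cut_def)

lemma level_finite:
  assumes t: "t \<in> Psi Sig X"
  shows "finite {w. t w \<noteq> None \<and> length w = k}"
proof (induction k)
  case 0
  have "{w. t w \<noteq> None \<and> length w = 0} \<subseteq> {[]}" by auto
  then show ?case by (rule finite_subset) simp
next
  case (Suc k)
  let ?L = "{w. t w \<noteq> None \<and> length w = k}"
  have "{w. t w \<noteq> None \<and> length w = Suc k} \<subseteq>
        (\<Union>w\<in>?L. (\<lambda>i. w @ [i]) ` {..<arity (the (t w))})"
  proof
    fix v assume v: "v \<in> {w. t w \<noteq> None \<and> length w = Suc k}"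
    then obtain w i where vw: "v = w @ [i]"
      by (metis (mono_tags, lifting) length_Suc_conv_rev mem_Collect_eq)
    from v vw have tv: "t (w @ [i]) \<noteq> None" and lw: "length w = k" by auto
    from t tv have tw: "t w \<noteq> None" unfolding Psi_def by blast
    then obtain l where l: "t w = Some l" by auto
    from t l tv have "i < arity l" unfolding Psi_def by blast
    with l tw lw vw show "v \<in> (\<Union>w\<in>?L. (\<lambda>i. w @ [i]) ` {..<arity (the (t w))})" by auto
  qed
  moreover have "finite (\<Union>w\<in>?L. (\<lambda>i. w @ [i]) ` {..<arity (the (t w))})"
    using Suc.IH by auto
  ultimately show ?case by (rule finite_subset)
qed

lemma bounded_finite:
  assumes t: "t \<in> Psi Sig X" and b: "\<And>w. n < length w \<Longrightarrow> t w = None"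
  shows "finite_tree t"
proof -
  have "{w. t w \<noteq> None} \<subseteq> (\<Union>k\<le>n. {w. t w \<noteq> None \<and> length w = k})"
  proof
    fix w assume w: "w \<in> {w. t w \<noteq> None}"
    hence "length w \<le> n" using b by (meson mem_Collect_eq not_le)
    with w show "w \<in> (\<Union>k\<le>n. {w. t w \<noteq> None \<and> length w = k})" by auto
  qed
  moreover have "finite (\<Union>k\<le>n. {w. t w \<noteq> None \<and> length w = k})"
    using level_finite[OF t] by auto
  ultimately show ?thesis unfolding finite_tree_def by (rule finite_subset)
qed

theorem mainTheorem1:
  fixes Sig :: "nat \<Rightarrow> 's set" and X :: "'x set" and p :: "('s, 'x) lab"
    and s :: "nat \<Rightarrow> ('s, 'x) tree"
  assumes p: "(\<exists>x\<in>X. p = Inr x) \<or> (\<exists>\<sigma>\<in>Sig 0. p = Inl (0, \<sigma>))"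
    and inPsi: "\<And>i. s i \<in> Psi Sig X"
    and incr: "\<And>i j. i < j \<Longrightarrow> cut_less p (s i) (s j)"
  shows "(\<forall>i. s i \<in> Phi Sig X) \<and> (\<exists>!u. u \<in> Psi Sig X \<and> (\<forall>i. cut_le p (s i) u))"
proof -
  have neq: "\<And>i j. i < j \<Longrightarrow> s i \<noteq> s j" using incr unfolding cut_less_def by blast
  have "\<forall>i. \<exists>m. s i = cut p m (s (Suc i))"
    using incr unfolding cut_less_def cut_le_def by blast
  then obtain n where n: "\<And>i. s i = cut p (n i) (s (Suc i))" by metis
  have nsuc: "n i < n (Suc i)" for i
  proof (rule ccontr)
    assume "\<not> n i < n (Suc i)"
    hence "n (Suc i) \<le> n i" by simp
    hence "s i = s (Suc i)"
      using n[of i] n[of "Suc i"] cut_cut[of "n (Suc i)" "n i" p "s (Suc (Suc i))"] by simp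
    thus False using neq[of i "Suc i"] by simp
  qed
  have nge: "i \<le> n i" for i
    by (induction i) (auto intro: Suc_leI le_less_trans nsuc)
  have nmono: "i \<le> j \<Longrightarrow> n i \<le> n j" for i j
    using lift_Suc_mono_le[of n] nsuc by (metis less_imp_le)
  have agree: "length w < n i \<Longrightarrow> s (i + k) w = s i w" for w i k
  proof (induction k)
    case 0 then show ?case by simp
  next
    case (Suc k)
    have "n i \<le> n (i + k)" by (rule nmono) simp
    with Suc have "s (i + k) w = s (Suc (i + k)) w"
      using n[of "i+k"] cut_agree[of w "n (i+k)" p] by simp
    with Suc show ?case by simp
  qed
  have agree2: "length w < n i \<Longrightarrow> i \<le> j \<Longrightarrow> s j w = s i w" for w i j
    using agree[of w i "j - i"] by simp
  define u where "u = (\<lambda>w. s (Suc (length w)) w)"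
  have uag: "Suc (length w) \<le> j \<Longrightarrow> s j w = u w" for w j
    unfolding u_def by (rule agree2) (use nge[of "Suc (length w)"] in auto)
  have fin: "s i \<in> Phi Sig X" for i
  proof -
    have "\<And>w. n i < length w \<Longrightarrow> s i w = None"
      using n[of i] by (simp add: cut_def)
    with inPsi[of i] have "finite_tree (s i)" by (rule bounded_finite)
    with inPsi[of i] show ?thesis unfolding Phi_def by simp
  qed
  have uPsi: "u \<in> Psi Sig X"
  proof -
    have a: "u [] \<noteq> None" using inPsi[of 1] unfolding u_def Psi_def by simp
    have b: "u w \<noteq> None" if "u (w @ [i]) \<noteq> None" for w i
    proof -
      let ?k = "Suc (Suc (length w))"
      have "s ?k (w @ [i]) = u (w @ [i])" "s ?k w = u w" by (auto intro: uag)
      moreover have "\<forall>w i. s ?k (w @ [i]) \<noteq> None \<longrightarrow> s ?k w \<noteq> None"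
        using inPsi[of ?k] unfolding Psi_def by blast
      ultimately show ?thesis using that by metis
    qed
    have c: "is_label Sig X l \<and> (\<forall>i. u (w @ [i]) \<noteq> None \<longleftrightarrow> i < arity l)"
      if "u w = Some l" for w l
    proof -
      let ?k = "Suc (Suc (length w))"
      have e1: "\<And>i. s ?k (w @ [i]) = u (w @ [i])" and e2: "s ?k w = u w" by (auto intro: uag)
      from that e2 have "s ?k w = Some l" by simp
      with inPsi[of ?k] have "is_label Sig X l \<and> (\<forall>i. s ?k (w @ [i]) \<noteq> None \<longleftrightarrow> i < arity l)"
        unfolding Psi_def by blast
      with e1 show ?thesis by simp
    qed
    from a b c show ?thesis unfolding Psi_def by blast
  qed
  have ucut: "s i = cut p (n i) u" for i
  proof (rule ext)
    fix w
    show "s i w = cut p (n i) u w"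
    proof (cases "length w < n i")
      case True
      have "s (max i (Suc (length w))) w = s i w" by (rule agree2) (use True in auto)
      moreover have "s (max i (Suc (length w))) w = u w" by (rule uag) simp
      ultimately show ?thesis using True by (simp add: cut_def)
    next
      case False
      have "s i w = cut p (n i) (s (Suc i)) w" using n[of i] by simp
      moreover have "length w = n i \<Longrightarrow> s (Suc i) w = u w"
      proof -
        assume L: "length w = n i"
        have "length w < n (Suc i)" using L nsuc[of i] by simp
        hence "s (max (Suc i) (Suc (length w))) w = s (Suc i) w" by (rule agree2) simp
        moreover have "s (max (Suc i) (Suc (length w))) w = u w" by (rule uag) simp
        ultimately show ?thesis by simp
      qed
      ultimately show ?thesis using False by (auto simp: cut_def)
    qed
  qed
  have ub: "\<forall>i. cut_le p (s i) u" using ucut unfolding cut_le_def by blast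
  have inj: "inj s"
    by (rule injI) (metis neq linorder_neqE_nat)
  have uniq: "v = u" if vP: "v \<in> Psi Sig X" and vb: "\<forall>i. cut_le p (s i) v" for v
  proof (rule ext)
    fix w :: "nat list"
    let ?K = "Suc (length w)"
    have "\<exists>i\<ge>?K. s i \<noteq> v \<and> (\<forall>m. s i = cut p m v \<longrightarrow> length w < m)"
    proof (rule ccontr)
      assume H: "\<not> ?thesis"
      have "s ` {?K..} \<subseteq> insert v ((\<lambda>m. cut p m v) ` {..length w})"
      proof
        fix t assume "t \<in> s ` {?K..}"
        then obtain i where i: "i \<ge> ?K" "t = s i" by auto
        show "t \<in> insert v ((\<lambda>m. cut p m v) ` {..length w})"
        proof (cases "s i = v")
          case True then show ?thesis using i by simp
        next
          case False
          with H i obtain m where "s i = cut p m v" "\<not> length w < m" by blast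
          then show ?thesis using i by auto
        qed
      qed
      hence "finite (s ` {?K..})" by (rule finite_subset) simp
      moreover have "infinite (s ` {?K..})"
        using inj finite_imageD[of s "{?K..}"] infinite_Ici[of ?K]
        by (metis inj_on_subset subset_UNIV)
      ultimately show False by simp
    qed
    then obtain i where i: "i \<ge> ?K" "s i \<noteq> v" "\<forall>m. s i = cut p m v \<longrightarrow> length w < m" by blast
    from vb i obtain m where m: "s i = cut p m v" unfolding cut_le_def by blast
    with i have "length w < m" by blast
    with m have "s i w = v w" by (simp add: cut_def)
    moreover have "s i w = u w" using i by (intro uag) simp
    ultimately show "v w = u w" by simp
  qed
  show ?thesis using fin uPsi ub uniq by blast
qed

end
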